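(* If $T$ is totally positive, then $X^\mathrm{mon}\otimes_{k^\mathrm{mon}}T$ is a tropicalization of $X$ along $v$.
   Context: Let $k$ be an ordered blueprint and $B$ an ordered blue $k$-algebra, i.e. a morphism $k\to B$ of ordered blueprints; let $X=\operatorname{Spec}B$. For an ordered blueprint $C$, its associated monomial blueprint $C^\mathrm{mon}$ has the same underlying monoid as $C$, with partial order (subaddition) generated by the left monomial relations $a\leq\sum b_j$ ($a,b_j$ in the underlying monoid) that hold in $C$; its associated totally positive blueprint $C^\mathrm{pos}$ is $C$ with the additional relation $0\leq 1$ adjoined. An ordered blueprint $T$ is totally positive if $0\leq 1$ holds in $T$. A valuation $v:k\to T$ between ordered blueprints is a multiplicative map (a morphism of underlying monoids) such that the composition $k^\mathrm{mon}\to k\xrightarrow{v}T\to T^\mathrm{pos}$ is a morphism of ordered blueprints. For an ordered blue $T$-algebra $S$, let $\mathrm{Val}_v(B,S)$ be the set of valuations $w:B\to S$ that extend $v$, i.e. such that the square formed by $k\to B$, $v:k\to T$, $w:B\to S$ and $T\to S$ commutes. A tropicalization of $X$ along $v$ is an ordered blue $T$-scheme that represents the functor $S\mapsto\mathrm{Val}_v(B,S)$ on ordered blue $T$-algebras. Here $X^\mathrm{mon}=\operatorname{Spec}B^\mathrm{mon}$, and the tensor product $\otimes_{k^\mathrm{mon}}$ is taken in the category of ordered blueprints (base change along $k^\mathrm{mon}\to T$). *)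

theory Defs
  imports Main "HOL-Library.Multiset" "HOL-Library.FuncSet"
begin

text \<open>An ordered blueprint: a commutative monoid with zero (carrier bp_elts, product bp_mul,
unit bp_one, zero bp_zero) together with a subaddition bp_le, i.e. a preorder on the free
semiring N[A] of finite formal sums (multisets) of monoid elements that is closed under addition
and multiplication and identifies the monoid zero with the empty sum.\<close>

record 'a bp =
  bp_elts :: "'a set"
  bp_mul  :: "'a \<Rightarrow> 'a \<Rightarrow> 'a"
  bp_one  :: 'a
  bp_zero :: 'a
  bp_le   :: "'a multiset \<Rightarrow> 'a multiset \<Rightarrow> bool"

definition mmul :: "('a \<Rightarrow> 'a \<Rightarrow> 'a) \<Rightarrow> 'a multiset \<Rightarrow> 'a multiset \<Rightarrow> 'a multiset" where
  "mmul m x y = sum_mset (image_mset (\<lambda>a. image_mset (m a) y) x)"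

definition ordered_blueprint :: "'a bp \<Rightarrow> bool" where
  "ordered_blueprint B \<longleftrightarrow>
     (let E = bp_elts B; m = bp_mul B; le = bp_le B in
      bp_one B \<in> E \<and> bp_zero B \<in> E \<and>
      (\<forall>a\<in>E. \<forall>b\<in>E. m a b \<in> E) \<and>
      (\<forall>a\<in>E. \<forall>b\<in>E. \<forall>c\<in>E. m (m a b) c = m a (m b c)) \<and>
      (\<forall>a\<in>E. \<forall>b\<in>E. m a b = m b a) \<and>
      (\<forall>a\<in>E. m (bp_one B) a = a) \<and>
      (\<forall>a\<in>E. m (bp_zero B) a = bp_zero B) \<and>
      (\<forall>x y. le x y \<longrightarrow> set_mset x \<subseteq> E \<and> set_mset y \<subseteq> E) \<and>
      (\<forall>x. set_mset x \<subseteq> E \<longrightarrow> le x x) \<and>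
      (\<forall>x y z. le x y \<longrightarrow> le y z \<longrightarrow> le x z) \<and>
      (\<forall>x y z w. le x y \<longrightarrow> le z w \<longrightarrow> le (x + z) (y + w)) \<and>
      (\<forall>x y z w. le x y \<longrightarrow> le z w \<longrightarrow> le (mmul m x z) (mmul m y w)) \<and>
      le {#bp_zero B#} {#} \<and> le {#} {#bp_zero B#})"

inductive gen_sle :: "'a set \<Rightarrow> ('a \<Rightarrow> 'a \<Rightarrow> 'a) \<Rightarrow> 'a \<Rightarrow>
    ('a multiset \<Rightarrow> 'a multiset \<Rightarrow> bool) \<Rightarrow> 'a multiset \<Rightarrow> 'a multiset \<Rightarrow> bool"
  for E m z R where
  base: "R x y \<Longrightarrow> set_mset x \<subseteq> E \<Longrightarrow> set_mset y \<subseteq> E \<Longrightarrow> gen_sle E m z R x y"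
| refl: "set_mset x \<subseteq> E \<Longrightarrow> gen_sle E m z R x x"
| trans: "gen_sle E m z R x y \<Longrightarrow> gen_sle E m z R y w \<Longrightarrow> gen_sle E m z R x w"
| add: "gen_sle E m z R x y \<Longrightarrow> gen_sle E m z R u w \<Longrightarrow> gen_sle E m z R (x + u) (y + w)"
| mult: "gen_sle E m z R x y \<Longrightarrow> gen_sle E m z R u w \<Longrightarrow>
           gen_sle E m z R (mmul m x u) (mmul m y w)"
| zero1: "gen_sle E m z R {#z#} {#}"
| zero2: "gen_sle E m z R {#} {#z#}"

text \<open>Associated monomial blueprint C^mon: same monoid, subaddition generated by the left monomial
relations a \<le> \<Sum> b_j holding in C.\<close>
definition bp_mon :: "'a bp \<Rightarrow> 'a bp" where
  "bp_mon C = C\<lparr> bp_le := gen_sle (bp_elts C) (bp_mul C) (bp_zero C)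
                     (\<lambda>x y. bp_le C x y \<and> size x = 1) \<rparr>"

definition bp_pos :: "'a bp \<Rightarrow> 'a bp" where
  "bp_pos C = C\<lparr> bp_le := gen_sle (bp_elts C) (bp_mul C) (bp_zero C)
                     (\<lambda>x y. bp_le C x y \<or> (x = {#} \<and> y = {#bp_one C#})) \<rparr>"

definition totally_positive :: "'a bp \<Rightarrow> bool" where
  "totally_positive T \<longleftrightarrow> bp_le T {#} {#bp_one T#}"

definition mult_map :: "'a bp \<Rightarrow> 'b bp \<Rightarrow> ('a \<Rightarrow> 'b) \<Rightarrow> bool" where
  "mult_map B C f \<longleftrightarrow>
     f ` bp_elts B \<subseteq> bp_elts C \<and> f (bp_one B) = bp_one C \<and> f (bp_zero B) = bp_zero C \<and>
     (\<forall>a\<in>bp_elts B. \<forall>b\<in>bp_elts B. f (bp_mul B a b) = bp_mul C (f a) (f b))"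

definition bp_hom :: "'a bp \<Rightarrow> 'b bp \<Rightarrow> ('a \<Rightarrow> 'b) \<Rightarrow> bool" where
  "bp_hom B C f \<longleftrightarrow> mult_map B C f \<and>
     (\<forall>x y. bp_le B x y \<longrightarrow> bp_le C (image_mset f x) (image_mset f y))"

text \<open>Valuation: multiplicative map v such that k^mon \<rightarrow> k \<rightarrow> T \<rightarrow> T^pos is a morphism.\<close>
definition valuation :: "'a bp \<Rightarrow> 'b bp \<Rightarrow> ('a \<Rightarrow> 'b) \<Rightarrow> bool" where
  "valuation k T v \<longleftrightarrow> mult_map k T v \<and> bp_hom (bp_mon k) (bp_pos T) v"

text \<open>Val_v(B,S): valuations w : B \<rightarrow> S extending v, where B is a k-algebra via f and S a T-algebra
via g (functions taken extensional on the carrier of B).\<close>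
definition val_ext :: "'k bp \<Rightarrow> 'b bp \<Rightarrow> ('k \<Rightarrow> 'b) \<Rightarrow> 's bp \<Rightarrow> ('k \<Rightarrow> 't) \<Rightarrow> ('t \<Rightarrow> 's)
    \<Rightarrow> ('b \<Rightarrow> 's) set" where
  "val_ext k B f S v g = {w. w \<in> extensional (bp_elts B) \<and> valuation B S w \<and>
                             (\<forall>l\<in>bp_elts k. w (f l) = g (v l))}"

text \<open>Morphisms of ordered blue T-algebras P \<rightarrow> S (P a T-algebra via i, S via g).\<close>
definition hom_under :: "'t bp \<Rightarrow> 'p bp \<Rightarrow> ('t \<Rightarrow> 'p) \<Rightarrow> 's bp \<Rightarrow> ('t \<Rightarrow> 's) \<Rightarrow> ('p \<Rightarrow> 's) set" where
  "hom_under T P i S g = {h. h \<in> extensional (bp_elts P) \<and> bp_hom P S h \<and>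
                             (\<forall>c\<in>bp_elts T. h (i c) = g c)}"

inductive tens_eq :: "'k bp \<Rightarrow> 'b bp \<Rightarrow> 't bp \<Rightarrow> ('k \<Rightarrow> 'b) \<Rightarrow> ('k \<Rightarrow> 't) \<Rightarrow>
    'b \<times> 't \<Rightarrow> 'b \<times> 't \<Rightarrow> bool"
  for k B T f v where
  gen: "a \<in> bp_elts B \<Longrightarrow> c \<in> bp_elts T \<Longrightarrow> l \<in> bp_elts k \<Longrightarrow>
          tens_eq k B T f v (bp_mul B a (f l), c) (a, bp_mul T (v l) c)"
| refl: "a \<in> bp_elts B \<Longrightarrow> c \<in> bp_elts T \<Longrightarrow> tens_eq k B T f v (a, c) (a, c)"
| sym: "tens_eq k B T f v p q \<Longrightarrow> tens_eq k B T f v q p"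
| trans: "tens_eq k B T f v p q \<Longrightarrow> tens_eq k B T f v q r \<Longrightarrow> tens_eq k B T f v p r"

definition tens_cls :: "'k bp \<Rightarrow> 'b bp \<Rightarrow> 't bp \<Rightarrow> ('k \<Rightarrow> 'b) \<Rightarrow> ('k \<Rightarrow> 't) \<Rightarrow>
    'b \<times> 't \<Rightarrow> ('b \<times> 't) set" where
  "tens_cls k B T f v p = {q. tens_eq k B T f v p q}"

definition tens_elts :: "'k bp \<Rightarrow> 'b bp \<Rightarrow> 't bp \<Rightarrow> ('k \<Rightarrow> 'b) \<Rightarrow> ('k \<Rightarrow> 't) \<Rightarrow>
    ('b \<times> 't) set set" where
  "tens_elts k B T f v = tens_cls k B T f v ` (bp_elts B \<times> bp_elts T)"

definition tens_mul :: "'k bp \<Rightarrow> 'b bp \<Rightarrow> 't bp \<Rightarrow> ('k \<Rightarrow> 'b) \<Rightarrow> ('k \<Rightarrow> 't) \<Rightarrow>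
    ('b \<times> 't) set \<Rightarrow> ('b \<times> 't) set \<Rightarrow> ('b \<times> 't) set" where
  "tens_mul k B T f v X Y =
     (let p = (SOME p. p \<in> X); q = (SOME q. q \<in> Y) in
      tens_cls k B T f v (bp_mul B (fst p) (fst q), bp_mul T (snd p) (snd q)))"

definition tens_inl :: "'k bp \<Rightarrow> 'b bp \<Rightarrow> 't bp \<Rightarrow> ('k \<Rightarrow> 'b) \<Rightarrow> ('k \<Rightarrow> 't) \<Rightarrow>
    'b \<Rightarrow> ('b \<times> 't) set" where
  "tens_inl k B T f v b = tens_cls k B T f v (b, bp_one T)"

definition tens_inr :: "'k bp \<Rightarrow> 'b bp \<Rightarrow> 't bp \<Rightarrow> ('k \<Rightarrow> 'b) \<Rightarrow> ('k \<Rightarrow> 't) \<Rightarrow>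
    't \<Rightarrow> ('b \<times> 't) set" where
  "tens_inr k B T f v c = tens_cls k B T f v (bp_one B, c)"

definition bp_tensor :: "'k bp \<Rightarrow> 'b bp \<Rightarrow> 't bp \<Rightarrow> ('k \<Rightarrow> 'b) \<Rightarrow> ('k \<Rightarrow> 't) \<Rightarrow>
    ('b \<times> 't) set bp" where
  "bp_tensor k B T f v =
     \<lparr> bp_elts = tens_elts k B T f v,
       bp_mul = tens_mul k B T f v,
       bp_one = tens_cls k B T f v (bp_one B, bp_one T),
       bp_zero = tens_cls k B T f v (bp_zero B, bp_zero T),
       bp_le = gen_sle (tens_elts k B T f v) (tens_mul k B T f v)
                 (tens_cls k B T f v (bp_zero B, bp_zero T))
                 (\<lambda>x y. (\<exists>a b. bp_le B a b \<and> x = image_mset (tens_inl k B T f v) a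
                                            \<and> y = image_mset (tens_inl k B T f v) b) \<or>
                       (\<exists>a b. bp_le T a b \<and> x = image_mset (tens_inr k B T f v) a
                                            \<and> y = image_mset (tens_inr k B T f v) b)) \<rparr>"

end

theory Submission
  imports Defs
begin


lemma ob_facts:
  assumes "ordered_blueprint B"
  shows ob_one: "bp_one B \<in> bp_elts B" and ob_zero: "bp_zero B \<in> bp_elts B"
   and ob_cl: "\<And>a b. a \<in> bp_elts B \<Longrightarrow> b \<in> bp_elts B \<Longrightarrow> bp_mul B a b \<in> bp_elts B"
   and ob_assoc: "\<And>a b c. a \<in> bp_elts B \<Longrightarrow> b \<in> bp_elts B \<Longrightarrow> c \<in> bp_elts B \<Longrightarrow>
        bp_mul B (bp_mul B a b) c = bp_mul B a (bp_mul B b c)"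
   and ob_comm: "\<And>a b. a \<in> bp_elts B \<Longrightarrow> b \<in> bp_elts B \<Longrightarrow> bp_mul B a b = bp_mul B b a"
   and ob_unit: "\<And>a. a \<in> bp_elts B \<Longrightarrow> bp_mul B (bp_one B) a = a"
   and ob_zm: "\<And>a. a \<in> bp_elts B \<Longrightarrow> bp_mul B (bp_zero B) a = bp_zero B"
   and ob_leset: "\<And>x y. bp_le B x y \<Longrightarrow> set_mset x \<subseteq> bp_elts B \<and> set_mset y \<subseteq> bp_elts B"
   and ob_refl: "\<And>x. set_mset x \<subseteq> bp_elts B \<Longrightarrow> bp_le B x x"
   and ob_trans: "\<And>x y z. bp_le B x y \<Longrightarrow> bp_le B y z \<Longrightarrow> bp_le B x z"
   and ob_add: "\<And>x y z w. bp_le B x y \<Longrightarrow> bp_le B z w \<Longrightarrow> bp_le B (x+z) (y+w)"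
   and ob_mult: "\<And>x y z w. bp_le B x y \<Longrightarrow> bp_le B z w \<Longrightarrow> bp_le B (mmul (bp_mul B) x z) (mmul (bp_mul B) y w)"
   and ob_z1: "bp_le B {#bp_zero B#} {#}" and ob_z2: "bp_le B {#} {#bp_zero B#}"
proof -
  note H = assms[unfolded ordered_blueprint_def Let_def]
  let ?E = "bp_elts B" and ?m = "bp_mul B" and ?le = "bp_le B"
  have c3: "\<forall>a\<in>?E. \<forall>b\<in>?E. ?m a b \<in> ?E" using H by (elim conjE) assumption
  have c4: "\<forall>a\<in>?E. \<forall>b\<in>?E. \<forall>c\<in>?E. ?m (?m a b) c = ?m a (?m b c)" using H by (elim conjE) assumption
  have c5: "\<forall>a\<in>?E. \<forall>b\<in>?E. ?m a b = ?m b a" using H by (elim conjE) assumption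
  have c6: "\<forall>a\<in>?E. ?m (bp_one B) a = a" using H by (elim conjE) assumption
  have c7: "\<forall>a\<in>?E. ?m (bp_zero B) a = bp_zero B" using H by (elim conjE) assumption
  have c8: "\<forall>x y. ?le x y \<longrightarrow> set_mset x \<subseteq> ?E \<and> set_mset y \<subseteq> ?E" using H by (elim conjE) assumption
  have c9: "\<forall>x. set_mset x \<subseteq> ?E \<longrightarrow> ?le x x" using H by (elim conjE) assumption
  have c10: "\<forall>x y z. ?le x y \<longrightarrow> ?le y z \<longrightarrow> ?le x z" using H by (elim conjE) assumption
  have c11: "\<forall>x y z w. ?le x y \<longrightarrow> ?le z w \<longrightarrow> ?le (x + z) (y + w)" using H by (elim conjE) assumption
  have c12: "\<forall>x y z w. ?le x y \<longrightarrow> ?le z w \<longrightarrow> ?le (mmul ?m x z) (mmul ?m y w)" using H by (elim conjE) assumption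
  show "bp_one B \<in> bp_elts B" using H by (elim conjE)
  show "bp_zero B \<in> bp_elts B" using H by (elim conjE)
  show "\<And>a b. a \<in> bp_elts B \<Longrightarrow> b \<in> bp_elts B \<Longrightarrow> bp_mul B a b \<in> bp_elts B" using c3 by blast
  show "\<And>a b c. a \<in> bp_elts B \<Longrightarrow> b \<in> bp_elts B \<Longrightarrow> c \<in> bp_elts B \<Longrightarrow>
        bp_mul B (bp_mul B a b) c = bp_mul B a (bp_mul B b c)" using c4 by blast
  show "\<And>a b. a \<in> bp_elts B \<Longrightarrow> b \<in> bp_elts B \<Longrightarrow> bp_mul B a b = bp_mul B b a" using c5 by blast
  show "\<And>a. a \<in> bp_elts B \<Longrightarrow> bp_mul B (bp_one B) a = a" using c6 by blast
  show "\<And>a. a \<in> bp_elts B \<Longrightarrow> bp_mul B (bp_zero B) a = bp_zero B" using c7 by blast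
  show "\<And>x y. bp_le B x y \<Longrightarrow> set_mset x \<subseteq> bp_elts B \<and> set_mset y \<subseteq> bp_elts B" using c8 by blast
  show "\<And>x. set_mset x \<subseteq> bp_elts B \<Longrightarrow> bp_le B x x" using c9 by blast
  show "\<And>x y z. bp_le B x y \<Longrightarrow> bp_le B y z \<Longrightarrow> bp_le B x z" using c10 by blast
  show "\<And>x y z w. bp_le B x y \<Longrightarrow> bp_le B z w \<Longrightarrow> bp_le B (x+z) (y+w)" using c11 by blast
  show "\<And>x y z w. bp_le B x y \<Longrightarrow> bp_le B z w \<Longrightarrow> bp_le B (mmul (bp_mul B) x z) (mmul (bp_mul B) y w)" using c12 by blast
  show "bp_le B {#bp_zero B#} {#}" using H by (elim conjE)
  show "bp_le B {#} {#bp_zero B#}" using H by (elim conjE)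
qed

lemma mmul_add_mset[simp]: "mmul m (add_mset a x) y = image_mset (m a) y + mmul m x y"
  by (simp add: mmul_def)
lemma mmul_empty[simp]: "mmul m {#} y = {#}" by (simp add: mmul_def)

lemma set_mmul: "set_mset (mmul m x y) \<subseteq> {m a b | a b. a \<in># x \<and> b \<in># y}"
proof (induction x)
  case empty then show ?case by simp
next
  case (add a x)
  have "set_mset (image_mset (m a) y) \<subseteq> {m a' b | a' b. a' \<in># add_mset a x \<and> b \<in># y}" by auto
  moreover have "{m a b | a b. a \<in># x \<and> b \<in># y} \<subseteq> {m a' b | a' b. a' \<in># add_mset a x \<and> b \<in># y}" by auto
  ultimately show ?case using add.IH by auto
qed

lemma image_mmul: "(\<And>a b. a \<in># x \<Longrightarrow> b \<in># y \<Longrightarrow> h (m a b) = m' (h a) (h b)) \<Longrightarrow>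
   image_mset h (mmul m x y) = mmul m' (image_mset h x) (image_mset h y)"
proof (induction x)
  case empty then show ?case by simp
next
  case (add a x)
  have "image_mset h (image_mset (m a) y) = image_mset (m' (h a)) (image_mset h y)"
    by (simp add: multiset.map_comp o_def add.prems cong: image_mset_cong)
  then show ?case using add by simp
qed

lemma gen_sle_set:
  assumes "gen_sle E m z R x y" "\<And>a b. a \<in> E \<Longrightarrow> b \<in> E \<Longrightarrow> m a b \<in> E" "z \<in> E"
  shows "set_mset x \<subseteq> E \<and> set_mset y \<subseteq> E"
  using assms(1)
proof induction
  case (mult x y u w)
  then show ?case using set_mmul[of m x u] set_mmul[of m y w] assms(2) by blast
qed (use assms in auto)

lemma gen_sle_le:
  assumes "gen_sle E m z R x y"
    and "\<And>x. set_mset x \<subseteq> E \<Longrightarrow> le x x"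
    and "\<And>x y w. le x y \<Longrightarrow> le y w \<Longrightarrow> le x w"
    and "\<And>x y u w. le x y \<Longrightarrow> le u w \<Longrightarrow> le (x+u) (y+w)"
    and "\<And>x y u w. le x y \<Longrightarrow> le u w \<Longrightarrow> le (mmul m x u) (mmul m y w)"
    and "le {#z#} {#}" "le {#} {#z#}"
    and "\<And>x y. R x y \<Longrightarrow> set_mset x \<subseteq> E \<Longrightarrow> set_mset y \<subseteq> E \<Longrightarrow> le x y"
  shows "le x y"
  using assms(1)
proof induction
  case (base x y) then show ?case using assms(8) by blast
next
  case (refl x) then show ?case using assms(2) by blast
next
  case (trans x y w) then show ?case using assms(3) by blast
next
  case (add x y u w) then show ?case using assms(4) by blast
next
  case (mult x y u w) then show ?case using assms(5) by blast
next
  case zero1 then show ?case using assms(6) by blast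
next
  case zero2 then show ?case using assms(7) by blast
qed

lemma gen_sle_hom:
  assumes "gen_sle E m z R x y" "\<And>a b. a \<in> E \<Longrightarrow> b \<in> E \<Longrightarrow> m a b \<in> E" "z \<in> E"
    and S: "ordered_blueprint S"
    and hE: "\<And>a. a \<in> E \<Longrightarrow> h a \<in> bp_elts S"
    and hm: "\<And>a b. a \<in> E \<Longrightarrow> b \<in> E \<Longrightarrow> h (m a b) = bp_mul S (h a) (h b)"
    and hz: "h z = bp_zero S"
    and base: "\<And>x y. R x y \<Longrightarrow> set_mset x \<subseteq> E \<Longrightarrow> set_mset y \<subseteq> E \<Longrightarrow>
                 bp_le S (image_mset h x) (image_mset h y)"
  shows "bp_le S (image_mset h x) (image_mset h y)"
  using assms(1)
proof induction
  case (base x y) then show ?case by (rule assms(8))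
next
  case (refl x) then show ?case using hE by (intro ob_refl[OF S]) auto
next
  case (trans x y w) then show ?case using ob_trans[OF S] by blast
next
  case (add x y u w) then show ?case using ob_add[OF S] by fastforce
next
  case (mult x y u w)
  have s1: "set_mset x \<subseteq> E \<and> set_mset y \<subseteq> E" using gen_sle_set[OF mult(1) assms(2,3)] .
  have s2: "set_mset u \<subseteq> E \<and> set_mset w \<subseteq> E" using gen_sle_set[OF mult(2) assms(2,3)] .
  have "image_mset h (mmul m x u) = mmul (bp_mul S) (image_mset h x) (image_mset h u)"
    by (rule image_mmul) (use s1 s2 hm in blast)
  moreover have "image_mset h (mmul m y w) = mmul (bp_mul S) (image_mset h y) (image_mset h w)"
    by (rule image_mmul) (use s1 s2 hm in blast)
  ultimately show ?case using ob_mult[OF S mult(3,4)] by simp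
next
  case zero1 then show ?case using hz ob_z1[OF S] by simp
next
  case zero2 then show ?case using hz ob_z2[OF S] by simp
qed

lemma pos_le:
  assumes S: "ordered_blueprint S" and tp: "totally_positive S" and "bp_le (bp_pos S) x y"
  shows "bp_le S x y"
  using assms(3) unfolding bp_pos_def
  apply simp
  apply (erule gen_sle_le)
        apply (erule ob_refl[OF S])
       apply (erule (1) ob_trans[OF S])
      apply (erule (1) ob_add[OF S])
     apply (erule (1) ob_mult[OF S])
    apply (rule ob_z1[OF S])
   apply (rule ob_z2[OF S])
  using tp unfolding totally_positive_def by blast

lemma bp_mon_simps[simp]: "bp_elts (bp_mon C) = bp_elts C" "bp_mul (bp_mon C) = bp_mul C"
  "bp_one (bp_mon C) = bp_one C" "bp_zero (bp_mon C) = bp_zero C"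
  by (simp_all add: bp_mon_def)




locale tsetup =
  fixes k :: "'k bp" and B :: "'b bp" and T :: "'t bp" and f :: "'k \<Rightarrow> 'b" and v :: "'k \<Rightarrow> 't"
  assumes kk: "ordered_blueprint k" and BB: "ordered_blueprint B" and fh: "bp_hom k B f"
    and TT: "ordered_blueprint T" and vv: "valuation k T v" and tp: "totally_positive T"
begin

abbreviation "eq \<equiv> tens_eq (bp_mon k) (bp_mon B) T f v"
abbreviation "cls \<equiv> tens_cls (bp_mon k) (bp_mon B) T f v"
abbreviation "mul \<equiv> tens_mul (bp_mon k) (bp_mon B) T f v"
abbreviation "inl \<equiv> tens_inl (bp_mon k) (bp_mon B) T f v"
abbreviation "inr \<equiv> tens_inr (bp_mon k) (bp_mon B) T f v"
abbreviation "E \<equiv> tens_elts (bp_mon k) (bp_mon B) T f v"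
abbreviation "TS \<equiv> bp_tensor (bp_mon k) (bp_mon B) T f v"
abbreviation "C \<equiv> bp_elts B \<times> bp_elts T"

definition pmul where "pmul p q = (bp_mul B (fst p) (fst q), bp_mul T (snd p) (snd q))"

lemmas Bf = ob_facts[OF BB]
lemmas Tf = ob_facts[OF TT]

lemma f_el: "l \<in> bp_elts k \<Longrightarrow> f l \<in> bp_elts B"
  using fh unfolding bp_hom_def mult_map_def by blast
lemma f_zero: "f (bp_zero k) = bp_zero B"
  using fh unfolding bp_hom_def mult_map_def by blast
lemma v_el: "l \<in> bp_elts k \<Longrightarrow> v l \<in> bp_elts T"
  using vv unfolding valuation_def mult_map_def by blast
lemma v_zero: "v (bp_zero k) = bp_zero T"
  using vv unfolding valuation_def mult_map_def by blast

lemma gen': "a \<in> bp_elts B \<Longrightarrow> c \<in> bp_elts T \<Longrightarrow> l \<in> bp_elts k \<Longrightarrow>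
   eq (bp_mul B a (f l), c) (a, bp_mul T (v l) c)"
  using tens_eq.gen[of a "bp_mon B" c T l "bp_mon k" f v] by simp

lemma eq_C: "eq p q \<Longrightarrow> p \<in> C \<and> q \<in> C"
  by (induction rule: tens_eq.induct) (auto intro: Bf(3) Tf(3) f_el v_el)

lemma eq_refl: "p \<in> C \<Longrightarrow> eq p p"
  by (cases p) (auto intro: tens_eq.refl)

lemma pmul_C: "p \<in> C \<Longrightarrow> q \<in> C \<Longrightarrow> pmul p q \<in> C"
  by (auto simp: pmul_def intro: Bf(3) Tf(3))

lemma eq_mul1: "eq p q \<Longrightarrow> r \<in> C \<Longrightarrow> eq (pmul p r) (pmul q r)"
proof (induction rule: tens_eq.induct)
  case (gen a c l)
  obtain b d where r: "r = (b, d)" "b \<in> bp_elts B" "d \<in> bp_elts T" using gen.prems by auto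
  have fl: "f l \<in> bp_elts B" using f_el gen by auto
  have vl: "v l \<in> bp_elts T" using v_el gen by auto
  have 1: "bp_mul B (bp_mul B a (f l)) b = bp_mul B (bp_mul B a b) (f l)"
    using Bf(4)[of a "f l" b] Bf(4)[of a b "f l"] Bf(5)[of "f l" b] fl r gen by simp
  have 2: "bp_mul T (bp_mul T (v l) c) d = bp_mul T (v l) (bp_mul T c d)"
    using Tf(4) vl r gen by simp
  have "eq (bp_mul B (bp_mul B a b) (f l), bp_mul T c d) (bp_mul B a b, bp_mul T (v l) (bp_mul T c d))"
    by (rule gen') (use gen r Bf(3) Tf(3) in auto)
  then show ?case using 1 2 r by (simp add: pmul_def)
next
  case (refl a c) then show ?case by (intro eq_refl pmul_C) auto
next
  case (sym p q) then show ?case by (blast intro: tens_eq.sym)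
next
  case (trans p q r') then show ?case by (blast intro: tens_eq.trans)
qed

lemma pmul_comm: "p \<in> C \<Longrightarrow> q \<in> C \<Longrightarrow> pmul p q = pmul q p"
  by (auto simp: pmul_def intro: Bf(5) Tf(5))

lemma eq_mul: "eq p p' \<Longrightarrow> eq q q' \<Longrightarrow> eq (pmul p q) (pmul p' q')"
proof -
  assume a: "eq p p'" "eq q q'"
  have "eq (pmul p q) (pmul p' q)" using eq_mul1 a eq_C by blast
  moreover have "eq (pmul q p') (pmul q' p')" using eq_mul1 a eq_C by blast
  ultimately show ?thesis using pmul_comm eq_C a by (metis tens_eq.trans)
qed

lemma cls_def': "cls p = {q. eq p q}" by (simp add: tens_cls_def)

lemma mem_cls: "p \<in> C \<Longrightarrow> p \<in> cls p" by (simp add: cls_def' eq_refl)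

lemma cls_eq: "eq p q \<Longrightarrow> cls p = cls q"
  unfolding cls_def' by (blast intro: tens_eq.sym tens_eq.trans)

lemma cls_eq_iff: "q \<in> C \<Longrightarrow> cls p = cls q \<longleftrightarrow> eq p q"
  using mem_cls cls_eq cls_def' by blast

lemma E_def': "E = cls ` C" by (simp add: tens_elts_def)

lemma mul_cls: "p \<in> C \<Longrightarrow> q \<in> C \<Longrightarrow> mul (cls p) (cls q) = cls (pmul p q)"
proof -
  assume p: "p \<in> C" and q: "q \<in> C"
  define p' where "p' = (SOME p'. p' \<in> cls p)"
  define q' where "q' = (SOME q'. q' \<in> cls q)"
  have "p' \<in> cls p" unfolding p'_def using mem_cls[OF p] by (rule someI)
  hence ep: "eq p p'" by (simp add: cls_def')
  have "q' \<in> cls q" unfolding q'_def using mem_cls[OF q] by (rule someI)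
  hence eqq: "eq q q'" by (simp add: cls_def')
  have "mul (cls p) (cls q) = cls (pmul p' q')"
    by (simp add: tens_mul_def p'_def q'_def pmul_def Let_def)
  also have "\<dots> = cls (pmul p q)" using eq_mul[OF ep eqq] cls_eq tens_eq.sym by metis
  finally show ?thesis .
qed

end



lemma ob_intro:
  assumes "bp_one B \<in> bp_elts B" "bp_zero B \<in> bp_elts B"
   "\<And>a b. a \<in> bp_elts B \<Longrightarrow> b \<in> bp_elts B \<Longrightarrow> bp_mul B a b \<in> bp_elts B"
   "\<And>a b c. a \<in> bp_elts B \<Longrightarrow> b \<in> bp_elts B \<Longrightarrow> c \<in> bp_elts B \<Longrightarrow>
        bp_mul B (bp_mul B a b) c = bp_mul B a (bp_mul B b c)"
   "\<And>a b. a \<in> bp_elts B \<Longrightarrow> b \<in> bp_elts B \<Longrightarrow> bp_mul B a b = bp_mul B b a"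
   "\<And>a. a \<in> bp_elts B \<Longrightarrow> bp_mul B (bp_one B) a = a"
   "\<And>a. a \<in> bp_elts B \<Longrightarrow> bp_mul B (bp_zero B) a = bp_zero B"
   "\<And>x y. bp_le B x y \<Longrightarrow> set_mset x \<subseteq> bp_elts B \<and> set_mset y \<subseteq> bp_elts B"
   "\<And>x. set_mset x \<subseteq> bp_elts B \<Longrightarrow> bp_le B x x"
   "\<And>x y z. bp_le B x y \<Longrightarrow> bp_le B y z \<Longrightarrow> bp_le B x z"
   "\<And>x y z w. bp_le B x y \<Longrightarrow> bp_le B z w \<Longrightarrow> bp_le B (x+z) (y+w)"
   "\<And>x y z w. bp_le B x y \<Longrightarrow> bp_le B z w \<Longrightarrow> bp_le B (mmul (bp_mul B) x z) (mmul (bp_mul B) y w)"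
   "bp_le B {#bp_zero B#} {#}" "bp_le B {#} {#bp_zero B#}"
  shows "ordered_blueprint B"
  unfolding ordered_blueprint_def Let_def
  apply (intro conjI allI ballI impI)
           apply (rule assms(1))
          apply (rule assms(2))
         apply (erule (1) assms(3))
        apply (erule (2) assms(4))
       apply (erule (1) assms(5))
      apply (erule assms(6))
     apply (erule assms(7))
    apply (drule assms(8), erule conjunct1)
   apply (drule assms(8), erule conjunct2)
  apply (erule assms(9))
  apply (erule (1) assms(10))
  apply (erule (1) assms(11))
  apply (erule (1) assms(12))
  apply (rule assms(13))
  apply (rule assms(14))
  done



context tsetup begin

definition tR where "tR = (\<lambda>x y. (\<exists>a b. bp_le (bp_mon B) a b \<and> x = image_mset inl a \<and> y = image_mset inl b) \<or>
                       (\<exists>a b. bp_le T a b \<and> x = image_mset inr a \<and> y = image_mset inr b))"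

abbreviation "one \<equiv> cls (bp_one B, bp_one T)"
abbreviation "zero \<equiv> cls (bp_zero B, bp_zero T)"

lemma TS_simps: "bp_elts TS = E" "bp_mul TS = mul" "bp_one TS = one" "bp_zero TS = zero"
  "bp_le TS = gen_sle E mul zero tR"
  by (simp_all add: bp_tensor_def tR_def)

lemma E_cases: "X \<in> E \<Longrightarrow> (\<And>a c. a \<in> bp_elts B \<Longrightarrow> c \<in> bp_elts T \<Longrightarrow> X = cls (a, c) \<Longrightarrow> P) \<Longrightarrow> P"
  unfolding E_def' by auto

lemma cls_E: "a \<in> bp_elts B \<Longrightarrow> c \<in> bp_elts T \<Longrightarrow> cls (a, c) \<in> E"
  unfolding E_def' by auto

lemma mul_cls2: "a \<in> bp_elts B \<Longrightarrow> c \<in> bp_elts T \<Longrightarrow> b \<in> bp_elts B \<Longrightarrow> d \<in> bp_elts T \<Longrightarrow>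
  mul (cls (a, c)) (cls (b, d)) = cls (bp_mul B a b, bp_mul T c d)"
  using mul_cls[of "(a,c)" "(b,d)"] by (simp add: pmul_def)

lemma one_E: "one \<in> E" and zero_E: "zero \<in> E"
  by (auto intro!: cls_E Bf(1,2) Tf(1,2))

lemma mul_E: "X \<in> E \<Longrightarrow> Y \<in> E \<Longrightarrow> mul X Y \<in> E"
  by (auto elim!: E_cases simp: mul_cls2 intro!: cls_E Bf(3) Tf(3))

lemma mul_assoc: "X \<in> E \<Longrightarrow> Y \<in> E \<Longrightarrow> Z \<in> E \<Longrightarrow> mul (mul X Y) Z = mul X (mul Y Z)"
  by (auto elim!: E_cases simp: mul_cls2 Bf(3,4) Tf(3,4))

lemma mul_comm: "X \<in> E \<Longrightarrow> Y \<in> E \<Longrightarrow> mul X Y = mul Y X"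
  by (auto elim!: E_cases simp: mul_cls2 Bf(5) Tf(5))

lemma mul_one: "X \<in> E \<Longrightarrow> mul one X = X"
  by (auto elim!: E_cases simp: mul_cls2 Bf(1,6) Tf(1,6))

lemma mul_zero: "X \<in> E \<Longrightarrow> mul zero X = zero"
  by (auto elim!: E_cases simp: mul_cls2 Bf(2,7) Tf(2,7))

lemma inl_E: "b \<in> bp_elts B \<Longrightarrow> inl b \<in> E"
  by (simp add: tens_inl_def cls_E Tf(1))
lemma inr_E: "c \<in> bp_elts T \<Longrightarrow> inr c \<in> E"
  by (simp add: tens_inr_def cls_E Bf(1))

lemma tR_set: "tR x y \<Longrightarrow> set_mset x \<subseteq> E \<and> set_mset y \<subseteq> E"
proof -
  assume "tR x y"
  then consider (l) a b where "bp_le (bp_mon B) a b" "x = image_mset inl a" "y = image_mset inl b"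
    | (r) a b where "bp_le T a b" "x = image_mset inr a" "y = image_mset inr b"
    unfolding tR_def by blast
  then show ?thesis
  proof cases
    case l
    have "gen_sle (bp_elts B) (bp_mul B) (bp_zero B) (\<lambda>x y. bp_le B x y \<and> size x = 1) a b"
      using l(1) by (simp add: bp_mon_def)
    hence "set_mset a \<subseteq> bp_elts B \<and> set_mset b \<subseteq> bp_elts B"
      by (rule gen_sle_set) (auto intro: Bf(2,3))
    then show ?thesis using l inl_E by auto
  next
    case r
    then show ?thesis using Tf(8)[OF r(1)] inr_E by auto
  qed
qed

lemma le_set: "gen_sle E mul zero tR x y \<Longrightarrow> set_mset x \<subseteq> E \<and> set_mset y \<subseteq> E"
  by (erule gen_sle_set) (auto intro: mul_E zero_E)

lemma ob_TS: "ordered_blueprint TS"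
  apply (rule ob_intro; unfold TS_simps)
               apply (rule one_E)
              apply (rule zero_E)
             apply (erule (1) mul_E)
            apply (erule (2) mul_assoc)
           apply (erule (1) mul_comm)
          apply (erule mul_one)
         apply (erule mul_zero)
        apply (erule le_set)
       apply (erule gen_sle.refl)
      apply (erule (1) gen_sle.trans)
     apply (erule (1) gen_sle.add)
    apply (erule (1) gen_sle.mult)
   apply (rule gen_sle.zero1)
  apply (rule gen_sle.zero2)
  done

end



lemma hom_facts:
  assumes "bp_hom B C h"
  shows hom_el: "\<And>a. a \<in> bp_elts B \<Longrightarrow> h a \<in> bp_elts C" and hom_one: "h (bp_one B) = bp_one C"
    and hom_zero: "h (bp_zero B) = bp_zero C"
    and hom_mul: "\<And>a b. a \<in> bp_elts B \<Longrightarrow> b \<in> bp_elts B \<Longrightarrow> h (bp_mul B a b) = bp_mul C (h a) (h b)"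
    and hom_le: "\<And>x y. bp_le B x y \<Longrightarrow> bp_le C (image_mset h x) (image_mset h y)"
proof -
  have m: "mult_map B C h" and l: "\<forall>x y. bp_le B x y \<longrightarrow> bp_le C (image_mset h x) (image_mset h y)"
    using assms unfolding bp_hom_def by blast+
  have i: "h ` bp_elts B \<subseteq> bp_elts C" and o: "h (bp_one B) = bp_one C" and z: "h (bp_zero B) = bp_zero C"
    and mm: "\<forall>a\<in>bp_elts B. \<forall>b\<in>bp_elts B. h (bp_mul B a b) = bp_mul C (h a) (h b)"
    using m unfolding mult_map_def by blast+
  show "\<And>a. a \<in> bp_elts B \<Longrightarrow> h a \<in> bp_elts C" using i by blast
  show "h (bp_one B) = bp_one C" by (rule o)
  show "h (bp_zero B) = bp_zero C" by (rule z)
  show "\<And>a b. a \<in> bp_elts B \<Longrightarrow> b \<in> bp_elts B \<Longrightarrow> h (bp_mul B a b) = bp_mul C (h a) (h b)" using mm by blast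
  show "\<And>x y. bp_le B x y \<Longrightarrow> bp_le C (image_mset h x) (image_mset h y)" using l by blast
qed

lemma bp_pos_simps[simp]: "bp_elts (bp_pos C) = bp_elts C" "bp_mul (bp_pos C) = bp_mul C"
  "bp_one (bp_pos C) = bp_one C" "bp_zero (bp_pos C) = bp_zero C"
  by (simp_all add: bp_pos_def)

lemma mult_map_mon_pos: "mult_map (bp_mon B) (bp_pos S) w \<longleftrightarrow> mult_map B S w"
  by (simp add: mult_map_def)

lemma le_pos:
  assumes S: "ordered_blueprint S" and le: "bp_le S x y"
  shows "bp_le (bp_pos S) x y"
proof -
  have st: "set_mset x \<subseteq> bp_elts S \<and> set_mset y \<subseteq> bp_elts S" using ob_leset[OF S le] .
  show ?thesis unfolding bp_pos_def
    apply simp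
    apply (rule gen_sle.base)
    using le st by auto
qed

context tsetup begin

lemma zk: "bp_zero k \<in> bp_elts k" using ob_zero[OF kk] .

lemma eq_zz: "eq (bp_zero B, bp_zero T) (bp_one B, bp_zero T)"
proof -
  have "eq (bp_mul B (bp_one B) (f (bp_zero k)), bp_zero T) (bp_one B, bp_mul T (v (bp_zero k)) (bp_zero T))"
    by (rule gen') (use zk Bf(1,2) Tf(1,2) in auto)
  then show ?thesis by (simp add: f_zero v_zero Bf(1-7) Tf(1-7))
qed

lemma eq_z1: "eq (bp_zero B, bp_one T) (bp_zero B, bp_zero T)"
proof -
  have "eq (bp_mul B (bp_zero B) (f (bp_zero k)), bp_one T) (bp_zero B, bp_mul T (v (bp_zero k)) (bp_one T))"
    by (rule gen') (use zk Bf(1,2) Tf(1,2) in auto)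
  then show ?thesis by (simp add: f_zero v_zero Bf(1-7) Tf(1-7))
qed

lemma inr_zero: "inr (bp_zero T) = zero"
  unfolding tens_inr_def using cls_eq[OF eq_zz] by simp
lemma inl_zero: "inl (bp_zero B) = zero"
  unfolding tens_inl_def using cls_eq[OF eq_z1] by simp
lemma inr_one: "inr (bp_one T) = one" by (simp add: tens_inr_def)
lemma inl_one: "inl (bp_one B) = one" by (simp add: tens_inl_def)
lemma inr_mul: "c \<in> bp_elts T \<Longrightarrow> d \<in> bp_elts T \<Longrightarrow> inr (bp_mul T c d) = mul (inr c) (inr d)"
  by (simp add: tens_inr_def mul_cls2 Bf(1-7))
lemma inl_mul: "a \<in> bp_elts B \<Longrightarrow> b \<in> bp_elts B \<Longrightarrow> inl (bp_mul B a b) = mul (inl a) (inl b)"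
  by (simp add: tens_inl_def mul_cls2 Tf(1-7))

lemma inl_fv: "l \<in> bp_elts k \<Longrightarrow> inl (f l) = inr (v l)"
proof -
  assume l: "l \<in> bp_elts k"
  have "eq (bp_mul B (bp_one B) (f l), bp_one T) (bp_one B, bp_mul T (v l) (bp_one T))"
    by (rule gen') (use l Bf(1,2) Tf(1,2) in auto)
  moreover have "bp_mul T (v l) (bp_one T) = v l"
    using Tf(5)[of "v l" "bp_one T"] Tf(6) Tf(1) v_el l by simp
  ultimately show ?thesis using cls_eq unfolding tens_inl_def tens_inr_def
    using Bf(6) f_el l by simp
qed

lemma cls_split: "a \<in> bp_elts B \<Longrightarrow> c \<in> bp_elts T \<Longrightarrow> cls (a, c) = mul (inl a) (inr c)"
proof -
  assume a: "a \<in> bp_elts B" and c: "c \<in> bp_elts T"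
  have "bp_mul B a (bp_one B) = a" using Bf(5)[OF a Bf(1)] Bf(6)[OF a] by simp
  moreover have "bp_mul T (bp_one T) c = c" using Tf(6)[OF c] .
  ultimately show ?thesis unfolding tens_inl_def tens_inr_def
    using mul_cls2[OF a Tf(1) Bf(1) c] by simp
qed

lemma inr_hom: "bp_hom T TS inr"
  unfolding bp_hom_def mult_map_def TS_simps
proof (intro conjI allI impI ballI)
  show "inr ` bp_elts T \<subseteq> E" using inr_E by blast
  fix x y assume "bp_le T x y"
  hence "tR (image_mset inr x) (image_mset inr y)" unfolding tR_def by blast
  thus "gen_sle E mul zero tR (image_mset inr x) (image_mset inr y)"
    using tR_set by (blast intro: gen_sle.base)
qed (simp_all add: inr_zero inr_one inr_mul)

end

locale tsetupS = tsetup k B T f v for k :: "'k bp" and B :: "'b bp" and T :: "'t bp" and f v +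
  fixes S :: "'s bp" and g :: "'t \<Rightarrow> 's"
  assumes SS: "ordered_blueprint S" and gh: "bp_hom T S g"
begin

lemmas Sf = ob_facts[OF SS]

lemmas g_el = hom_el[OF gh] and g_one = hom_one[OF gh] and g_zero = hom_zero[OF gh]
  and g_mul = hom_mul[OF gh] and g_le = hom_le[OF gh]

lemma S_tp: "totally_positive S"
  using g_le[of "{#}" "{#bp_one T#}"] tp g_one unfolding totally_positive_def by simp

lemma restr_val:
  assumes h: "h \<in> hom_under T TS inr S g"
  shows "restrict (h \<circ> inl) (bp_elts B) \<in> val_ext k B f S v g"
proof -
  have hx: "h \<in> extensional E" and hb: "bp_hom TS S h" and hr: "\<And>c. c \<in> bp_elts T \<Longrightarrow> h (inr c) = g c"
    using h unfolding hom_under_def TS_simps by blast+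
  note hE = hom_el[OF hb, unfolded TS_simps] and h1 = hom_one[OF hb, unfolded TS_simps]
    and h0 = hom_zero[OF hb, unfolded TS_simps] and hm = hom_mul[OF hb, unfolded TS_simps]
    and hle = hom_le[OF hb, unfolded TS_simps]
  define w where "w = restrict (h \<circ> inl) (bp_elts B)"
  have mm: "mult_map B S w"
    unfolding mult_map_def w_def
    using hE inl_E h1 h0 hm inl_one inl_zero inl_mul Bf(1,2,3) by auto
  have le: "bp_le (bp_pos S) (image_mset w x) (image_mset w y)" if "bp_le (bp_mon B) x y" for x y
  proof -
    have sx: "set_mset x \<subseteq> bp_elts B \<and> set_mset y \<subseteq> bp_elts B"
      using that gen_sle_set[of "bp_elts B" "bp_mul B" "bp_zero B"] Bf(2,3)
      unfolding bp_mon_def by simp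
    have ix: "image_mset w x = image_mset h (image_mset inl x)"
      "image_mset w y = image_mset h (image_mset inl y)"
      using sx by (auto simp: w_def multiset.map_comp intro!: image_mset_cong)
    have "tR (image_mset inl x) (image_mset inl y)" unfolding tR_def using that by blast
    hence "gen_sle E mul zero tR (image_mset inl x) (image_mset inl y)"
      using tR_set by (blast intro: gen_sle.base)
    from hle[OF this] show ?thesis unfolding ix by (rule le_pos[OF SS])
  qed
  have "valuation B S w" unfolding valuation_def bp_hom_def mult_map_mon_pos
    using mm le by blast
  moreover have "\<forall>l\<in>bp_elts k. w (f l) = g (v l)"
    using f_el inl_fv hr v_el by (simp add: w_def)
  ultimately show ?thesis unfolding val_ext_def w_def by simp
qed

end



context tsetupS begin

lemma S4: "x \<in> bp_elts S \<Longrightarrow> y \<in> bp_elts S \<Longrightarrow> z \<in> bp_elts S \<Longrightarrow> u \<in> bp_elts S \<Longrightarrow>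
  bp_mul S (bp_mul S x y) (bp_mul S z u) = bp_mul S (bp_mul S x z) (bp_mul S y u)"
proof -
  assume xs: "x \<in> bp_elts S" "y \<in> bp_elts S" "z \<in> bp_elts S" "u \<in> bp_elts S"
  have "bp_mul S (bp_mul S x y) (bp_mul S z u) = bp_mul S x (bp_mul S y (bp_mul S z u))"
    using Sf(4)[of x y "bp_mul S z u"] Sf(3) xs by simp
  also have "bp_mul S y (bp_mul S z u) = bp_mul S (bp_mul S y z) u" using Sf(4)[of y z u] xs by simp
  also have "bp_mul S y z = bp_mul S z y" using Sf(5) xs by simp
  also have "bp_mul S (bp_mul S z y) u = bp_mul S z (bp_mul S y u)" using Sf(4)[of z y u] xs by simp
  also have "bp_mul S x (bp_mul S z (bp_mul S y u)) = bp_mul S (bp_mul S x z) (bp_mul S y u)"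
    using Sf(4)[of x z "bp_mul S y u"] Sf(3) xs by simp
  finally show ?thesis .
qed

lemma hom_inj:
  assumes h1: "h1 \<in> hom_under T TS inr S g" and h2: "h2 \<in> hom_under T TS inr S g"
    and e: "restrict (h1 \<circ> inl) (bp_elts B) = restrict (h2 \<circ> inl) (bp_elts B)"
  shows "h1 = h2"
proof
  fix X
  have x1: "h1 \<in> extensional E" and b1: "bp_hom TS S h1" and r1: "\<And>c. c \<in> bp_elts T \<Longrightarrow> h1 (inr c) = g c"
    using h1 unfolding hom_under_def TS_simps by blast+
  have x2: "h2 \<in> extensional E" and b2: "bp_hom TS S h2" and r2: "\<And>c. c \<in> bp_elts T \<Longrightarrow> h2 (inr c) = g c"
    using h2 unfolding hom_under_def TS_simps by blast+
  show "h1 X = h2 X"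
  proof (cases "X \<in> E")
    case True
    then obtain a c where ac: "a \<in> bp_elts B" "c \<in> bp_elts T" "X = cls (a, c)" by (rule E_cases)
    have il: "h1 (inl a) = h2 (inl a)" using fun_cong[OF e, of a] ac by simp
    have "h1 X = bp_mul S (h1 (inl a)) (h1 (inr c))"
      using ac cls_split hom_mul[OF b1, unfolded TS_simps] inl_E inr_E by simp
    also have "\<dots> = bp_mul S (h2 (inl a)) (h2 (inr c))" using il r1 r2 ac by simp
    also have "\<dots> = h2 X"
      using ac cls_split hom_mul[OF b2, unfolded TS_simps] inl_E inr_E by simp
    finally show ?thesis .
  next
    case False then show ?thesis using x1 x2 by (simp add: extensional_def)
  qed
qed

end

locale tsetupW = tsetupS k B T f v S g for k :: "'k bp" and B :: "'b bp" and T :: "'t bp" and f v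
  and S :: "'s bp" and g +
  fixes w :: "'b \<Rightarrow> 's"
  assumes ww: "w \<in> val_ext k B f S v g"
begin

lemma w_facts: "w \<in> extensional (bp_elts B)" "valuation B S w" "\<And>l. l \<in> bp_elts k \<Longrightarrow> w (f l) = g (v l)"
  using ww unfolding val_ext_def by blast+

lemma w_hom: "bp_hom (bp_mon B) (bp_pos S) w"
  using w_facts(2) unfolding valuation_def by blast

lemmas w_el = hom_el[OF w_hom, unfolded bp_mon_simps bp_pos_simps]
  and w_one = hom_one[OF w_hom, unfolded bp_mon_simps bp_pos_simps]
  and w_zero = hom_zero[OF w_hom, unfolded bp_mon_simps bp_pos_simps]
  and w_mul = hom_mul[OF w_hom, unfolded bp_mon_simps bp_pos_simps]
  and w_le = hom_le[OF w_hom]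

definition phi where "phi p = bp_mul S (w (fst p)) (g (snd p))"

lemma phi_inv: "eq p q \<Longrightarrow> phi p = phi q"
proof (induction rule: tens_eq.induct)
  case (gen a c l)
  have a: "a \<in> bp_elts B" and c: "c \<in> bp_elts T" and l: "l \<in> bp_elts k" using gen by simp_all
  have "phi (bp_mul B a (f l), c) = bp_mul S (bp_mul S (w a) (g (v l))) (g c)"
    unfolding phi_def using w_mul[OF a f_el[OF l]] w_facts(3)[OF l] by simp
  also have "\<dots> = bp_mul S (w a) (bp_mul S (g (v l)) (g c))"
    using Sf(4) w_el[OF a] g_el[OF v_el[OF l]] g_el[OF c] by simp
  also have "\<dots> = phi (a, bp_mul T (v l) c)"
    unfolding phi_def using g_mul[OF v_el[OF l] c] by simp
  finally show ?case by simp
qed simp_all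

definition H where "H X = (if X \<in> E then phi (SOME p. p \<in> X) else undefined)"

lemma H_cls: "p \<in> C \<Longrightarrow> H (cls p) = phi p"
proof -
  assume p: "p \<in> C"
  have "(SOME p'. p' \<in> cls p) \<in> cls p" using mem_cls[OF p] by (rule someI)
  hence "eq p (SOME p'. p' \<in> cls p)" by (simp add: cls_def')
  moreover have "cls p \<in> E" using p by (simp add: E_def')
  ultimately show ?thesis unfolding H_def using phi_inv by simp
qed

lemma H_cls2: "a \<in> bp_elts B \<Longrightarrow> c \<in> bp_elts T \<Longrightarrow> H (cls (a, c)) = bp_mul S (w a) (g c)"
  using H_cls[of "(a,c)"] by (simp add: phi_def)

lemma H_inl: "a \<in> bp_elts B \<Longrightarrow> H (inl a) = w a"
proof -
  assume a: "a \<in> bp_elts B"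
  have "H (inl a) = bp_mul S (w a) (bp_one S)"
    unfolding tens_inl_def using H_cls2[OF a Tf(1)] g_one by simp
  also have "\<dots> = w a" using Sf(5)[OF w_el[OF a] Sf(1)] Sf(6)[OF w_el[OF a]] by simp
  finally show ?thesis .
qed

lemma H_inr: "c \<in> bp_elts T \<Longrightarrow> H (inr c) = g c"
proof -
  assume c: "c \<in> bp_elts T"
  have "H (inr c) = bp_mul S (bp_one S) (g c)"
    unfolding tens_inr_def using H_cls2[OF Bf(1) c] w_one by simp
  also have "\<dots> = g c" using Sf(6)[OF g_el[OF c]] .
  finally show ?thesis .
qed

lemma H_el: "X \<in> E \<Longrightarrow> H X \<in> bp_elts S"
  by (erule E_cases) (simp add: H_cls2 Sf(3) w_el g_el)

lemma H_mul: "X \<in> E \<Longrightarrow> Y \<in> E \<Longrightarrow> H (mul X Y) = bp_mul S (H X) (H Y)"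
proof -
  assume X: "X \<in> E" and Y: "Y \<in> E"
  obtain a c where ac: "a \<in> bp_elts B" "c \<in> bp_elts T" "X = cls (a, c)" using X by (rule E_cases)
  obtain b d where bd: "b \<in> bp_elts B" "d \<in> bp_elts T" "Y = cls (b, d)" using Y by (rule E_cases)
  have "H (mul X Y) = bp_mul S (w (bp_mul B a b)) (g (bp_mul T c d))"
    using ac bd by (simp add: mul_cls2 H_cls2 Bf(3) Tf(3))
  also have "\<dots> = bp_mul S (bp_mul S (w a) (w b)) (bp_mul S (g c) (g d))"
    using ac bd w_mul g_mul by simp
  also have "\<dots> = bp_mul S (bp_mul S (w a) (g c)) (bp_mul S (w b) (g d))"
    using S4 ac bd w_el g_el by simp
  also have "\<dots> = bp_mul S (H X) (H Y)" using ac bd by (simp add: H_cls2)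
  finally show ?thesis .
qed

lemma H_one: "H one = bp_one S"
  using H_cls2[OF Bf(1) Tf(1)] w_one g_one Sf(6)[OF Sf(1)] by simp

lemma H_zero: "H zero = bp_zero S"
  using H_cls2[OF Bf(2) Tf(2)] w_zero g_zero Sf(7)[OF Sf(2)] by simp

lemma H_base: "tR x y \<Longrightarrow> bp_le S (image_mset H x) (image_mset H y)"
proof -
  assume "tR x y"
  then consider (l) a b where "bp_le (bp_mon B) a b" "x = image_mset inl a" "y = image_mset inl b"
    | (r) a b where "bp_le T a b" "x = image_mset inr a" "y = image_mset inr b"
    unfolding tR_def by blast
  then show ?thesis
  proof cases
    case l
    have "gen_sle (bp_elts B) (bp_mul B) (bp_zero B) (\<lambda>x y. bp_le B x y \<and> size x = 1) a b"
      using l(1) by (simp add: bp_mon_def)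
    hence st: "set_mset a \<subseteq> bp_elts B \<and> set_mset b \<subseteq> bp_elts B"
      by (rule gen_sle_set) (auto intro: Bf(2,3))
    have ia: "image_mset H x = image_mset w a" "image_mset H y = image_mset w b"
      using st l(2,3) H_inl by (auto simp: multiset.map_comp intro!: image_mset_cong)
    show ?thesis unfolding ia by (rule pos_le[OF SS S_tp w_le[OF l(1)]])
  next
    case r
    have st: "set_mset a \<subseteq> bp_elts T \<and> set_mset b \<subseteq> bp_elts T" using Tf(8)[OF r(1)] .
    have ia: "image_mset H x = image_mset g a" "image_mset H y = image_mset g b"
      using st r(2,3) H_inr by (auto simp: multiset.map_comp intro!: image_mset_cong)
    show ?thesis unfolding ia by (rule g_le[OF r(1)])
  qed
qed

lemma H_hom: "bp_hom TS S H"
  unfolding bp_hom_def mult_map_def TS_simps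
proof (intro conjI allI impI ballI)
  show "H ` E \<subseteq> bp_elts S" using H_el by blast
  show "H one = bp_one S" by (rule H_one)
  show "H zero = bp_zero S" by (rule H_zero)
  fix X Y assume "X \<in> E" "Y \<in> E" then show "H (mul X Y) = bp_mul S (H X) (H Y)" by (rule H_mul)
next
  fix x y assume "gen_sle E mul zero tR x y"
  then show "bp_le S (image_mset H x) (image_mset H y)"
  proof (rule gen_sle_hom)
    show "\<And>a b. a \<in> E \<Longrightarrow> b \<in> E \<Longrightarrow> mul a b \<in> E" by (rule mul_E)
    show "zero \<in> E" by (rule zero_E)
    show "ordered_blueprint S" by (rule SS)
    show "\<And>a. a \<in> E \<Longrightarrow> H a \<in> bp_elts S" by (rule H_el)
    show "\<And>a b. a \<in> E \<Longrightarrow> b \<in> E \<Longrightarrow> H (mul a b) = bp_mul S (H a) (H b)" by (rule H_mul)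
    show "H zero = bp_zero S" by (rule H_zero)
    show "\<And>x y. tR x y \<Longrightarrow> set_mset x \<subseteq> E \<Longrightarrow> set_mset y \<subseteq> E \<Longrightarrow>
            bp_le S (image_mset H x) (image_mset H y)" by (rule H_base)
  qed
qed

lemma H_under: "H \<in> hom_under T TS inr S g"
  unfolding hom_under_def TS_simps
  using H_hom H_inr by (auto simp: H_def extensional_def)

lemma H_restr: "restrict (H \<circ> inl) (bp_elts B) = w"
proof
  fix x show "restrict (H \<circ> inl) (bp_elts B) x = w x"
    using H_inl w_facts(1) by (cases "x \<in> bp_elts B") (auto simp: extensional_def)
qed

end

context tsetupS begin

lemma bij: "bij_betw (\<lambda>h. restrict (h \<circ> inl) (bp_elts B)) (hom_under T TS inr S g) (val_ext k B f S v g)"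
  unfolding bij_betw_def
proof
  show "inj_on (\<lambda>h. restrict (h \<circ> inl) (bp_elts B)) (hom_under T TS inr S g)"
    by (rule inj_onI) (rule hom_inj)
  show "(\<lambda>h. restrict (h \<circ> inl) (bp_elts B)) ` hom_under T TS inr S g = val_ext k B f S v g"
  proof
    show "(\<lambda>h. restrict (h \<circ> inl) (bp_elts B)) ` hom_under T TS inr S g \<subseteq> val_ext k B f S v g"
      using restr_val by blast
  next
    show "val_ext k B f S v g \<subseteq> (\<lambda>h. restrict (h \<circ> inl) (bp_elts B)) ` hom_under T TS inr S g"
    proof
      fix w assume w: "w \<in> val_ext k B f S v g"
      interpret W: tsetupW k B T f v S g w by unfold_locales (rule w)
      show "w \<in> (\<lambda>h. restrict (h \<circ> inl) (bp_elts B)) ` hom_under T TS inr S g"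
      proof (rule image_eqI[where x = W.H])
        show "w = restrict (W.H \<circ> inl) (bp_elts B)" using W.H_restr by simp
        show "W.H \<in> hom_under T TS inr S g" by (rule W.H_under)
      qed
    qed
  qed
qed

end



theorem theoremA:
  fixes k :: "'k bp" and B :: "'b bp" and T :: "'t bp"
    and f :: "'k \<Rightarrow> 'b" and v :: "'k \<Rightarrow> 't"
  assumes "ordered_blueprint k" and "ordered_blueprint B" and "bp_hom k B f"
    and "ordered_blueprint T" and "valuation k T v"
    and "totally_positive T"
  shows "ordered_blueprint (bp_tensor (bp_mon k) (bp_mon B) T f v)
       \<and> bp_hom T (bp_tensor (bp_mon k) (bp_mon B) T f v) (tens_inr (bp_mon k) (bp_mon B) T f v)
       \<and> restrict (tens_inl (bp_mon k) (bp_mon B) T f v) (bp_elts B)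
           \<in> val_ext k B f (bp_tensor (bp_mon k) (bp_mon B) T f v) v
               (tens_inr (bp_mon k) (bp_mon B) T f v)
       \<and> (\<forall>(S :: 's bp) (g :: 't \<Rightarrow> 's). ordered_blueprint S \<and> bp_hom T S g \<longrightarrow>
            bij_betw (\<lambda>h. restrict (h \<circ> tens_inl (bp_mon k) (bp_mon B) T f v) (bp_elts B))
              (hom_under T (bp_tensor (bp_mon k) (bp_mon B) T f v)
                 (tens_inr (bp_mon k) (bp_mon B) T f v) S g)
              (val_ext k B f S v g))"
proof -
  interpret tsetup k B T f v by unfold_locales (rule assms)+
  have ob: "ordered_blueprint TS" by (rule ob_TS)
  have ih: "bp_hom T TS inr" by (rule inr_hom)
  interpret TT: tsetupS k B T f v TS inr by unfold_locales (rule ob, rule ih)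
  have idh: "restrict id E \<in> hom_under T TS inr TS inr"
    unfolding hom_under_def bp_hom_def mult_map_def TS_simps
  proof (intro CollectI conjI allI impI ballI)
    show "restrict id E \<in> extensional E" by (rule restrict_extensional)
    show "restrict id E ` E \<subseteq> E" by auto
    show "restrict id E one = one" using one_E by simp
    show "restrict id E zero = zero" using zero_E by simp
    fix X Y assume "X \<in> E" "Y \<in> E"
    then show "restrict id E (mul X Y) = mul (restrict id E X) (restrict id E Y)"
      using mul_E by simp
  next
    fix x y assume le: "gen_sle E mul zero tR x y"
    have st: "set_mset x \<subseteq> E \<and> set_mset y \<subseteq> E" using le_set[OF le] .
    have "image_mset (restrict id E) x = x" "image_mset (restrict id E) y = y"
      using st by (auto intro!: image_mset_cong[where g = id, simplified])
    then show "gen_sle E mul zero tR (image_mset (restrict id E) x) (image_mset (restrict id E) y)"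
      using le by simp
  next
    fix c assume "c \<in> bp_elts T"
    then show "restrict id E (inr c) = inr c" using inr_E by simp
  qed
  have "restrict (restrict id E \<circ> inl) (bp_elts B) = restrict inl (bp_elts B)"
  proof
    fix b show "restrict (restrict id E \<circ> inl) (bp_elts B) b = restrict inl (bp_elts B) b"
      using inl_E[of b] by (cases "b \<in> bp_elts B") simp_all
  qed
  then have v3: "restrict inl (bp_elts B) \<in> val_ext k B f TS v inr"
    using TT.restr_val[OF idh] by simp
  have v4: "\<forall>(S :: 's bp) (g :: 't \<Rightarrow> 's). ordered_blueprint S \<and> bp_hom T S g \<longrightarrow>
            bij_betw (\<lambda>h. restrict (h \<circ> inl) (bp_elts B)) (hom_under T TS inr S g) (val_ext k B f S v g)"
  proof (intro allI impI)
    fix S :: "'s bp" and g :: "'t \<Rightarrow> 's"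
    assume a: "ordered_blueprint S \<and> bp_hom T S g"
    interpret SS: tsetupS k B T f v S g by unfold_locales (use a in blast)+
    show "bij_betw (\<lambda>h. restrict (h \<circ> inl) (bp_elts B)) (hom_under T TS inr S g) (val_ext k B f S v g)"
      by (rule SS.bij)
  qed
  show ?thesis using ob ih v3 v4 by blast
qed

end
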